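(* Let $\epsilon>0$, $L=3/2-\epsilon$, and let $E\subset[0,L]$ be a measurable set with Lebesgue measure $m(E)=1$ such that $\sup E=\operatorname{ess\,sup}E$ and $\inf E=\operatorname{ess\,inf}E$. Suppose $E$ weakly tiles its complement with respect to a locally finite measure $\mu$ on $\mathbb{R}$, i.e. $\chi_E*\mu=\chi_{\mathbb{R}\setminus E}$ almost everywhere. Then $\mu=\sum_{k\in\mathbb{Z}\setminus\{0\}}\delta_k$.
   Context: Here $\mu$ is a positive, locally finite Borel measure on $\mathbb{R}$, $\chi_A$ denotes the indicator function of a set $A$, $(\chi_E*\mu)(x)=\int\chi_E(x-y)\,d\mu(y)=\mu(x-E)$, and $\delta_k$ is the Dirac mass at $k$. A set $E$ is said to weakly tile its complement with respect to $\mu$ if $\chi_E*\mu=\chi_{\mathbb{R}\setminus E}$ Lebesgue-almost everywhere. *)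

theory Defs
  imports "HOL-Analysis.Analysis"
begin

definition ess_sup_set :: "real set \<Rightarrow> real" where
  "ess_sup_set E = Inf {t. E \<inter> {t<..} \<in> null_sets lebesgue}"

definition ess_inf_set :: "real set \<Rightarrow> real" where
  "ess_inf_set E = Sup {t. E \<inter> {..<t} \<in> null_sets lebesgue}"

definition locally_finite_borel :: "real measure \<Rightarrow> bool" where
  "locally_finite_borel M \<longleftrightarrow> sets M = sets borel \<and>
     (\<forall>K. compact K \<longrightarrow> emeasure M K < \<infinity>)"

text \<open>Convolution (chi_E * mu)(x) = integral of chi_E(x - y) d mu(y)
  (integral w.r.t. the completion of mu, since E is only Lebesgue measurable).\<close>
definition conv_ind :: "real set \<Rightarrow> real measure \<Rightarrow> real \<Rightarrow> ennreal" where
  "conv_ind E M x = (\<integral>\<^sup>+ y. indicator E (x - y) \<partial>completion M)"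

definition weakly_tiles_complement :: "real set \<Rightarrow> real measure \<Rightarrow> bool" where
  "weakly_tiles_complement E M \<longleftrightarrow>
     (AE x in lebesgue. conv_ind E M x = indicator (UNIV - E) x)"

definition nonzero_integer_diracs :: "real measure" where
  "nonzero_integer_diracs = distr (count_space (UNIV - {0::int})) borel real_of_int"

end

theory Submission
  imports Defs
begin

lemma lb_shift:
  fixes t :: real
  assumes "B \<in> sets borel"
  shows "emeasure lborel {x. x + t \<in> B} = emeasure lborel B"
proof -
  have "emeasure lborel B = emeasure (distr lborel borel ((+) t)) B" by (simp add: lborel_distr_plus)
  also have "\<dots> = emeasure lborel ((+) t -` B)" using assms by (subst emeasure_distr) auto
  finally show ?thesis by (simp add: vimage_def add.commute)
qed

lemma lb_refl:
  fixes t :: real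
  assumes "B \<in> sets borel"
  shows "emeasure lborel {x. t - x \<in> B} = emeasure lborel B"
proof -
  have "lborel = density (distr lborel borel (\<lambda>x. t + (-1) * x)) (\<lambda>_. ennreal \<bar>-1\<bar>)"
    by (rule lborel_real_affine) simp
  then have "lborel = distr lborel borel (\<lambda>x. t - x)" by (simp add: density_1)
  then have "emeasure lborel B = emeasure (distr lborel borel (\<lambda>x. t - x)) B" by simp
  also have "\<dots> = emeasure lborel ((\<lambda>x. t - x) -` B)" using assms by (subst emeasure_distr) auto
  finally show ?thesis by (simp add: vimage_def)
qed

lemma borel_shift_set: assumes [measurable]: "B \<in> sets borel" shows "{x::real. x + t \<in> B} \<in> sets borel"
  by measurable
lemma borel_refl_set: assumes [measurable]: "B \<in> sets borel" shows "{x::real. t - x \<in> B} \<in> sets borel"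
  by measurable

lemma AE_lborel_shift:
  fixes c :: real
  assumes "AE x in lborel. P x"
  shows "AE x in lborel. P (x + c)"
proof -
  from assms obtain N where N: "{x. \<not> P x} \<subseteq> N" "N \<in> sets lborel" "emeasure lborel N = 0"
    by (auto elim!: AE_E)
  show ?thesis
  proof (rule AE_I[where N="{x. x + c \<in> N}"])
    show "{x \<in> space lborel. \<not> P (x + c)} \<subseteq> {x. x + c \<in> N}" using N by auto
    show "emeasure lborel {x. x + c \<in> N} = 0" using N lb_shift[of N c] by simp
    show "{x. x + c \<in> N} \<in> sets lborel" using N by simp
  qed
qed

lemma AE_lborel_refl:
  fixes c :: real
  assumes "AE x in lborel. P x"
  shows "AE x in lborel. P (c - x)"
proof -
  from assms obtain N where N: "{x. \<not> P x} \<subseteq> N" "N \<in> sets lborel" "emeasure lborel N = 0"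
    by (auto elim!: AE_E)
  show ?thesis
  proof (rule AE_I[where N="{x. c - x \<in> N}"])
    show "{x \<in> space lborel. \<not> P (c - x)} \<subseteq> {x. c - x \<in> N}" using N by auto
    show "emeasure lborel {x. c - x \<in> N} = 0" using N lb_refl[of N c] by simp
    show "{x. c - x \<in> N} \<in> sets lborel" using N by simp
  qed
qed

lemma AE_pos_exists:
  assumes "AE x in lborel. P x" "S \<in> sets borel" "emeasure lborel S > 0"
  shows "\<exists>x\<in>S. P x"
proof (rule ccontr)
  assume "\<not> ?thesis"
  then have "AE x in lborel. x \<notin> S" using assms(1) by auto
  then have "emeasure lborel S = 0" using assms(2) by (simp add: AE_iff_measurable[OF _ refl])
  with assms(3) show False by simp
qed

lemma key_overlap:
  fixes B :: "real set" and d t :: real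
  assumes Bb: "B \<in> sets borel" and Bsub: "B \<subseteq> {0..d}" and d: "d < 3/2"
    and mB: "emeasure lborel B = 1" and t: "0 < t" "t < 1"
  shows "emeasure lborel {z \<in> B. z + t \<in> B} > 0"
proof (rule ccontr)
  assume "\<not> ?thesis"
  then have O0: "emeasure lborel {z \<in> B. z + t \<in> B} = 0" by simp
  have [measurable]: "B \<in> sets borel" by fact
  define S1 where "S1 = B \<inter> {..<t}"
  define S2 where "S2 = {z. z + t \<in> B \<inter> {t..<2*t}}"
  have S1m[measurable]: "S1 \<in> sets borel" unfolding S1_def by measurable
  have S2m[measurable]: "S2 \<in> sets borel" unfolding S2_def by measurable
  have mS2: "emeasure lborel S2 = emeasure lborel (B \<inter> {t..<2*t})"
    unfolding S2_def by (rule lb_shift) measurable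
  have "S1 \<inter> S2 \<subseteq> {z \<in> B. z + t \<in> B}" unfolding S1_def S2_def by auto
  then have I0: "emeasure lborel (S1 \<inter> S2) = 0"
  proof -
    have "{z \<in> B. z + t \<in> B} \<in> sets lborel" by simp
    then show ?thesis using emeasure_mono[OF \<open>S1 \<inter> S2 \<subseteq> _\<close>, of lborel] O0 by simp
  qed
  have "S1 \<union> S2 \<subseteq> {0..t}" unfolding S1_def S2_def using Bsub by auto
  then have U: "emeasure lborel (S1 \<union> S2) \<le> ennreal t"
    using emeasure_mono[of "S1 \<union> S2" "{0..t}" lborel] t by simp
  have "emeasure lborel S1 + emeasure lborel S2 = emeasure lborel (S1 \<union> S2) + emeasure lborel (S1 \<inter> S2)"
    by (rule emeasure_Un_Int) auto
  with U I0 have F1: "emeasure lborel S1 + emeasure lborel (B \<inter> {t..<2*t}) \<le> ennreal t"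
    using mS2 by simp
  have "B \<subseteq> (S1 \<union> (B \<inter> {t..<2*t})) \<union> {2*t..d}" unfolding S1_def using Bsub by auto
  then have "emeasure lborel B \<le> emeasure lborel ((S1 \<union> (B \<inter> {t..<2*t})) \<union> {2*t..d})"
    by (intro emeasure_mono) auto
  also have "\<dots> \<le> emeasure lborel (S1 \<union> (B \<inter> {t..<2*t})) + emeasure lborel {2*t..d}"
    by (intro emeasure_subadditive) auto
  also have "\<dots> \<le> (emeasure lborel S1 + emeasure lborel (B \<inter> {t..<2*t})) + emeasure lborel {2*t..d}"
    by (intro add_right_mono emeasure_subadditive) auto
  also have "\<dots> \<le> ennreal t + ennreal (if 2*t \<le> d then d - 2*t else 0)"
    using F1 by (intro add_mono) (auto simp: emeasure_lborel_Icc_eq)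
  finally have F2: "1 \<le> ennreal t + ennreal (if 2*t \<le> d then d - 2*t else 0)" using mB by simp
  define C where "C = {z. z + t \<in> B}"
  have Cm[measurable]: "C \<in> sets borel" unfolding C_def by measurable
  have mC: "emeasure lborel C = 1" unfolding C_def using lb_shift[OF Bb, of t] mB by simp
  have "B \<inter> C = {z \<in> B. z + t \<in> B}" unfolding C_def by auto
  then have BC0: "emeasure lborel (B \<inter> C) = 0" using O0 by simp
  have "B \<noteq> {}" using mB by auto
  then have d0: "0 \<le> d" using Bsub by auto
  have "B \<union> C \<subseteq> {-t..d}" unfolding C_def using Bsub t by force
  then have BCU: "emeasure lborel (B \<union> C) \<le> ennreal (d + t)"
    using emeasure_mono[of "B \<union> C" "{-t..d}" lborel] t d0 by (simp add: emeasure_lborel_Icc_eq)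
  have "emeasure lborel B + emeasure lborel C = emeasure lborel (B \<union> C) + emeasure lborel (B \<inter> C)"
    by (rule emeasure_Un_Int) auto
  then have "emeasure lborel B + emeasure lborel C \<le> ennreal (d + t)" using BCU BC0 by simp
  then have F3: "ennreal 2 \<le> ennreal (d + t)" using mB mC by simp
  have F3': "2 \<le> d + t" using F3 d0 t by (subst (asm) ennreal_le_iff) auto
  show False
  proof (cases "2*t \<le> d")
    case True
    then have "ennreal 1 \<le> ennreal (t + (d - 2*t))" using F2 t by (simp add: ennreal_plus[symmetric])
    then have "1 \<le> d - t" using t True by (subst (asm) ennreal_le_iff) auto
    then show False using F3' d by linarith
  next
    case False
    then have "ennreal 1 \<le> ennreal t" using F2 by simp
    then show False using t by (subst (asm) ennreal_le_iff) auto
  qed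
qed

definition lf :: "real measure \<Rightarrow> bool" where
  "lf \<nu> \<longleftrightarrow> sets \<nu> = sets borel \<and> (\<forall>a b. emeasure \<nu> {a..b} < \<infinity>)"

definition tiles :: "real measure \<Rightarrow> real set \<Rightarrow> bool" where
  "tiles \<nu> B \<longleftrightarrow> (AE x in lborel. emeasure \<nu> {y. x - y \<in> B} = 1)"

definition good :: "real set \<Rightarrow> real \<Rightarrow> bool" where
  "good B d \<longleftrightarrow> B \<in> sets borel \<and> B \<subseteq> {0..d} \<and> d < 3/2 \<and> emeasure lborel B = 1 \<and>
     (\<forall>\<delta>>0. emeasure lborel (B \<inter> {..<\<delta>}) > 0)"

lemma lf_space: "lf \<nu> \<Longrightarrow> space \<nu> = UNIV"
  unfolding lf_def by (metis sets_eq_imp_space_eq space_borel)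

lemma lf_sets: "lf \<nu> \<Longrightarrow> A \<in> sets borel \<Longrightarrow> A \<in> sets \<nu>"
  unfolding lf_def by simp

lemma lf_sigma_finite:
  assumes "lf \<nu>" shows "sigma_finite_measure \<nu>"
proof (rule sigma_finite_measure.intro)
  let ?A = "range (\<lambda>n::nat. {-real n..real n})"
  have "\<Union> ?A = UNIV"
  proof safe
    fix x :: real
    obtain n :: nat where "\<bar>x\<bar> \<le> real n" using real_arch_simple by blast
    then show "x \<in> \<Union> ?A" by (auto intro!: exI[of _ n])
  qed auto
  then show "\<exists>A. countable A \<and> A \<subseteq> sets \<nu> \<and> \<Union> A = space \<nu> \<and> (\<forall>a\<in>A. emeasure \<nu> a \<noteq> \<infinity>)"
  proof (intro exI[of _ ?A] conjI)
    show "\<forall>a\<in>?A. emeasure \<nu> a \<noteq> \<infinity>" using assms unfolding lf_def by (auto simp: less_top)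
  qed (use assms lf_space[OF assms] lf_sets[OF assms] in auto)
qed

lemma lemP:
  assumes g: "good B d" and l: "lf \<nu>" and tl: "tiles \<nu> B" and c: "emeasure \<nu> {c} \<ge> 1"
  shows "emeasure \<nu> {c} = 1"
    and "AE y in \<nu>. y \<noteq> c \<longrightarrow> emeasure lborel {x. x - c \<in> B \<and> x - y \<in> B} = 0"
proof -
  have Bm[measurable]: "B \<in> sets borel" using g by (simp add: good_def)
  have mB: "emeasure lborel B = 1" using g by (simp add: good_def)
  have sn: "sets \<nu> = sets borel" using l by (simp add: lf_def)
  interpret sf: sigma_finite_measure \<nu> using lf_sigma_finite[OF l] .
  interpret ps: pair_sigma_finite lborel \<nu>
    unfolding pair_sigma_finite_def using lf_sigma_finite[OF l] sigma_finite_lborel by simp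
  define f where "f = (\<lambda>x y. indicator B (x - c) * indicator B (x - y) :: ennreal)"
  have fm1: "(\<lambda>(x, y). f x y) \<in> borel_measurable (lborel \<Otimes>\<^sub>M \<nu>)"
  proof -
    have "(\<lambda>(x, y). f x y) \<in> borel_measurable (borel \<Otimes>\<^sub>M borel)" unfolding f_def by measurable
    moreover have "(borel_measurable (lborel \<Otimes>\<^sub>M \<nu>) :: (real \<times> real \<Rightarrow> ennreal) set) = borel_measurable (borel \<Otimes>\<^sub>M borel)"
      by (rule measurable_cong_sets) (auto intro!: sets_pair_measure_cong simp: sn)
    ultimately show ?thesis by (simp only:)
  qed
  have fm2: "(\<lambda>(y, x). f x y) \<in> borel_measurable (\<nu> \<Otimes>\<^sub>M lborel)"
  proof -
    have "(\<lambda>(y, x). f x y) \<in> borel_measurable (borel \<Otimes>\<^sub>M borel)" unfolding f_def by measurable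
    moreover have "(borel_measurable (\<nu> \<Otimes>\<^sub>M lborel) :: (real \<times> real \<Rightarrow> ennreal) set) = borel_measurable (borel \<Otimes>\<^sub>M borel)"
      by (rule measurable_cong_sets) (auto intro!: sets_pair_measure_cong simp: sn)
    ultimately show ?thesis by (simp only:)
  qed
  define \<psi> where "\<psi> = (\<lambda>y. \<integral>\<^sup>+ x. f x y \<partial>lborel)"
  have \<psi>m: "\<psi> \<in> borel_measurable \<nu>"
    unfolding \<psi>_def using lborel.borel_measurable_nn_integral[OF fm2] by simp
  have \<psi>eq: "\<psi> y = emeasure lborel {x. x - c \<in> B \<and> x - y \<in> B}" for y
  proof -
    have "{x. x - c \<in> B \<and> x - y \<in> B} \<in> sets borel" by measurable
    moreover have "f x y = indicator {x. x - c \<in> B \<and> x - y \<in> B} x" for x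
      unfolding f_def by (auto simp: indicator_def)
    ultimately show ?thesis unfolding \<psi>_def by simp
  qed
  have \<psi>c: "\<psi> c = 1"
  proof -
    have "{x. x - c \<in> B \<and> x - c \<in> B} = {x. x + (- c) \<in> B}" by auto
    then show ?thesis using \<psi>eq[of c] lb_shift[OF Bm, of "-c"] mB by simp
  qed
  have inner: "(\<integral>\<^sup>+ y. f x y \<partial>\<nu>) = indicator B (x - c) * emeasure \<nu> {y. x - y \<in> B}" for x
  proof -
    have s: "{y. x - y \<in> B} \<in> sets \<nu>" using sn by simp
    have "(\<integral>\<^sup>+ y. f x y \<partial>\<nu>) = (\<integral>\<^sup>+ y. indicator B (x - c) * indicator {y. x - y \<in> B} y \<partial>\<nu>)"
      by (rule nn_integral_cong) (auto simp: f_def indicator_def)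
    also have "\<dots> = indicator B (x - c) * (\<integral>\<^sup>+ y. indicator {y. x - y \<in> B} y \<partial>\<nu>)"
      by (rule nn_integral_cmult) (use s in simp)
    also have "\<dots> = indicator B (x - c) * emeasure \<nu> {y. x - y \<in> B}" using s by simp
    finally show ?thesis .
  qed
  have "(\<integral>\<^sup>+ x. (\<integral>\<^sup>+ y. f x y \<partial>\<nu>) \<partial>lborel) = (\<integral>\<^sup>+ x. indicator {x. x + (-c) \<in> B} x \<partial>lborel)"
  proof (rule nn_integral_cong_AE)
    show "AE x in lborel. (\<integral>\<^sup>+ y. f x y \<partial>\<nu>) = indicator {x. x + (-c) \<in> B} x"
      using tl unfolding tiles_def by eventually_elim (auto simp: inner indicator_def)
  qed
  also have "\<dots> = 1" using lb_shift[OF Bm, of "-c"] mB by simp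
  finally have L1: "(\<integral>\<^sup>+ x. (\<integral>\<^sup>+ y. f x y \<partial>\<nu>) \<partial>lborel) = 1" .
  have "(\<integral>\<^sup>+ y. \<psi> y \<partial>\<nu>) = (\<integral>\<^sup>+ x. (\<integral>\<^sup>+ y. f x y \<partial>\<nu>) \<partial>lborel)"
    unfolding \<psi>_def by (rule ps.Fubini'[OF fm1])
  with L1 have T: "(\<integral>\<^sup>+ y. \<psi> y \<partial>\<nu>) = 1" by simp
  have sc: "{c} \<in> sets \<nu>" using sn by simp
  have "(\<integral>\<^sup>+ y. \<psi> y \<partial>\<nu>) = (\<integral>\<^sup>+ y. \<psi> y * indicator {c} y + \<psi> y * indicator (UNIV - {c}) y \<partial>\<nu>)"
    by (rule nn_integral_cong) (auto simp: indicator_def)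
  also have "\<dots> = (\<integral>\<^sup>+ y. \<psi> y * indicator {c} y \<partial>\<nu>) + (\<integral>\<^sup>+ y. \<psi> y * indicator (UNIV - {c}) y \<partial>\<nu>)"
  proof (rule nn_integral_add)
    have sc2: "UNIV - {c} \<in> sets \<nu>" using sn by simp
    note [measurable] = \<psi>m borel_measurable_indicator[OF sc] borel_measurable_indicator[OF sc2]
    show "(\<lambda>y. \<psi> y * indicator {c} y) \<in> borel_measurable \<nu>" by measurable
    show "(\<lambda>y. \<psi> y * indicator (UNIV - {c}) y) \<in> borel_measurable \<nu>" by measurable
  qed
  also have "(\<integral>\<^sup>+ y. \<psi> y * indicator {c} y \<partial>\<nu>) = emeasure \<nu> {c}"
    using nn_integral_indicator_singleton[OF sc, of \<psi>] \<psi>c by simp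
  finally have E: "1 = emeasure \<nu> {c} + (\<integral>\<^sup>+ y. \<psi> y * indicator (UNIV - {c}) y \<partial>\<nu>)"
    using T by simp
  define R where "R = (\<integral>\<^sup>+ y. \<psi> y * indicator (UNIV - {c}) y \<partial>\<nu>)"
  have E': "1 = emeasure \<nu> {c} + R" using E unfolding R_def .
  then have le1: "emeasure \<nu> {c} \<le> 1" by (metis le_iff_add)
  then show c1: "emeasure \<nu> {c} = 1" using c by simp
  have "1 + R \<le> 1 + 0" using E' c1 by simp
  then have "R = 0" by (subst (asm) ennreal_add_left_cancel_le) auto
  then have "AE y in \<nu>. \<psi> y * indicator (UNIV - {c}) y = 0"
  proof -
    have sc2: "UNIV - {c} \<in> sets \<nu>" using sn by simp
    note [measurable] = \<psi>m borel_measurable_indicator[OF sc2]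
    have "(\<lambda>y. \<psi> y * indicator (UNIV - {c}) y) \<in> borel_measurable \<nu>" by measurable
    then show ?thesis using \<open>R = 0\<close> unfolding R_def by (subst (asm) nn_integral_0_iff_AE) auto
  qed
  then show "AE y in \<nu>. y \<noteq> c \<longrightarrow> emeasure lborel {x. x - c \<in> B \<and> x - y \<in> B} = 0"
    by eventually_elim (auto simp: \<psi>eq indicator_def)
qed

lemma nu_bound:
  assumes l: "lf \<nu>" and "A \<subseteq> S \<union> N" "S \<in> sets borel" "N \<in> sets borel" "emeasure \<nu> N = 0"
  shows "emeasure \<nu> A \<le> emeasure \<nu> S"
proof -
  have sn: "sets \<nu> = sets borel" using l by (simp add: lf_def)
  have "emeasure \<nu> A \<le> emeasure \<nu> (S \<union> N)" using assms sn by (intro emeasure_mono) auto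
  also have "\<dots> \<le> emeasure \<nu> S + emeasure \<nu> N" using assms sn by (intro emeasure_subadditive) auto
  finally show ?thesis using assms by simp
qed

lemma good_props:
  assumes "good B d"
  shows "B \<in> sets borel" "B \<subseteq> {0..d}" "d < 3/2" "emeasure lborel B = 1"
    "\<And>\<delta>. \<delta> > 0 \<Longrightarrow> emeasure lborel (B \<inter> {..<\<delta>}) > 0" "0 \<le> d"
proof -
  show "B \<in> sets borel" "B \<subseteq> {0..d}" "d < 3/2" "emeasure lborel B = 1"
    "\<And>\<delta>. \<delta> > 0 \<Longrightarrow> emeasure lborel (B \<inter> {..<\<delta>}) > 0" using assms by (auto simp: good_def)
  then have "B \<noteq> {}" by auto
  with \<open>B \<subseteq> {0..d}\<close> show "0 \<le> d" by auto
qed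

lemma overlap_pos:
  assumes g: "good B d" and yc: "0 < \<bar>y - c\<bar>" "\<bar>y - c\<bar> < 1"
  shows "emeasure lborel {x. x - c \<in> B \<and> x - y \<in> B} > 0"
proof -
  note gp = good_props[OF g]
  have Bm[measurable]: "B \<in> sets borel" by (rule gp(1))
  show ?thesis
  proof (cases "c < y")
    case True
    define t where "t = y - c"
    have t: "0 < t" "t < 1" using yc True by (auto simp: t_def)
    have "{x. x - c \<in> B \<and> x - y \<in> B} = {x. x + (-y) \<in> {z \<in> B. z + t \<in> B}}"
      by (auto simp: t_def)
    moreover have "emeasure lborel {x. x + (-y) \<in> {z \<in> B. z + t \<in> B}} = emeasure lborel {z \<in> B. z + t \<in> B}"
      by (rule lb_shift) measurable
    ultimately show ?thesis using key_overlap[OF gp(1-4) t] by simp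
  next
    case False
    define t where "t = c - y"
    have t: "0 < t" "t < 1" using yc False by (auto simp: t_def)
    have "{x. x - c \<in> B \<and> x - y \<in> B} = {x. x + (-c) \<in> {z \<in> B. z + t \<in> B}}"
      by (auto simp: t_def)
    moreover have "emeasure lborel {x. x + (-c) \<in> {z \<in> B. z + t \<in> B}} = emeasure lborel {z \<in> B. z + t \<in> B}"
      by (rule lb_shift) measurable
    ultimately show ?thesis using key_overlap[OF gp(1-4) t] by simp
  qed
qed

lemma lemP_nbhd:
  assumes g: "good B d" and l: "lf \<nu>" and tl: "tiles \<nu> B" and c: "emeasure \<nu> {c} \<ge> 1"
  shows "emeasure \<nu> ({c-1<..<c+1} - {c}) = 0"
proof -
  have sn: "sets \<nu> = sets borel" using l by (simp add: lf_def)
  have "AE y in \<nu>. y \<notin> {c-1<..<c+1} - {c}"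
    using lemP(2)[OF g l tl c]
  proof eventually_elim
    case (elim y)
    show ?case
    proof
      assume y: "y \<in> {c-1<..<c+1} - {c}"
      then have "0 < \<bar>y - c\<bar>" "\<bar>y - c\<bar> < 1" by auto
      from overlap_pos[OF g this] elim y show False by auto
    qed
  qed
  then have "emeasure \<nu> {x \<in> space \<nu>. x \<in> {c-1<..<c+1} - {c}} = 0" by (rule emeasure_eq_0_AE)
  moreover have "{x \<in> space \<nu>. x \<in> {c-1<..<c+1} - {c}} = {c-1<..<c+1} - {c}"
    using lf_space[OF l] by auto
  ultimately show ?thesis by simp
qed

lemma core:
  assumes g: "good B d" and l: "lf \<nu>" and tl: "tiles \<nu> B" and c0: "emeasure \<nu> {0} \<ge> 1"
  shows "emeasure \<nu> {1} = 1 \<and> emeasure \<nu> {0<..<1} = 0"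
proof -
  note gp = good_props[OF g]
  have Bm[measurable]: "B \<in> sets borel" by (rule gp(1))
  have sn: "sets \<nu> = sets borel" using l by (simp add: lf_def)
  have Bsub: "B \<subseteq> {0..d}" and d: "d < 3/2" and d0: "0 \<le> d" using gp by auto
  have T: "AE x in lborel. emeasure \<nu> {y. x - y \<in> B} = 1" using tl by (simp add: tiles_def)
  have N0: "emeasure \<nu> ({-1<..<1} - {0}) = 0" using lemP_nbhd[OF g l tl c0] by simp
  have Npos1: "emeasure \<nu> {0<..<1} = 0"
  proof -
    have "{0<..<1} \<subseteq> {-1<..<1} - {0::real}" by auto
    then have "emeasure \<nu> {0<..<1} \<le> emeasure \<nu> ({-1<..<1} - {0})"
      by (intro emeasure_mono) (auto simp: sn)
    with N0 show ?thesis by simp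
  qed
  have AE0: "AE y in \<nu>. y \<noteq> 0 \<longrightarrow> emeasure lborel {x. x \<in> B \<and> x - y \<in> B} = 0"
    using lemP(2)[OF g l tl c0] by simp
  define Z where "Z = {u::real. emeasure \<nu> {0<..<u} = 0}"
  have oneZ: "1 \<in> Z" using Npos1 by (simp add: Z_def)
  have Zb: "u \<le> d" if "u \<in> Z" for u
  proof (rule ccontr)
    assume "\<not> u \<le> d"
    then have "emeasure lborel {d<..<u} > 0" by (simp add: emeasure_lborel_Ioo)
    from AE_pos_exists[OF T _ this] obtain x where
      x: "x \<in> {d<..<u}" "emeasure \<nu> {y. x - y \<in> B} = 1" by auto
    have "{y. x - y \<in> B} \<subseteq> {0<..<u}"
    proof
      fix y assume "y \<in> {y. x - y \<in> B}"
      then have "0 \<le> x - y" "x - y \<le> d" using Bsub by auto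
      then show "y \<in> {0<..<u}" using x by auto
    qed
    then have "emeasure \<nu> {y. x - y \<in> B} \<le> emeasure \<nu> {0<..<u}" by (intro emeasure_mono) (auto simp: sn)
    with x that show False by (simp add: Z_def)
  qed
  define s where "s = Sup Z"
  have Zne: "Z \<noteq> {}" using oneZ by auto
  have Zbdd: "bdd_above Z" using Zb by (auto simp: bdd_above_def)
  have s1: "1 \<le> s" unfolding s_def by (rule cSup_upper[OF oneZ Zbdd])
  have sd: "s \<le> d" unfolding s_def using Zb by (intro cSup_least[OF Zne]) auto
  have Ns: "emeasure \<nu> {0<..<s} = 0"
  proof -
    have eq: "{0<..<s} = (\<Union>n. {0<..<s - 1/Suc n})"
    proof
      show "{0<..<s} \<subseteq> (\<Union>n. {0<..<s - 1/Suc n})"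
      proof
        fix x assume x: "x \<in> {0<..<s}"
        then have "0 < s - x" by simp
        then obtain n where n: "n > 0" "inverse (real n) < s - x" using ex_inverse_of_nat_less by blast
        then obtain m where m: "n = Suc m" by (cases n) auto
        then have "1 / real (Suc m) < s - x" using n by (simp add: field_simps)
        then show "x \<in> (\<Union>n. {0<..<s - 1/Suc n})" using x by (auto intro!: exI[of _ m])
      qed
    next
      have p: "0 < 1 / (1 + real n)" for n by simp
      show "(\<Union>n. {0<..<s - 1/Suc n}) \<subseteq> {0<..<s}"
        using p by (auto simp: less_diff_eq) (smt (verit) p)
    qed
    have "emeasure \<nu> {0<..<s - 1/Suc n} = 0" for n
    proof -
      have "s - 1/Suc n < s" by simp
      then obtain u where u: "u \<in> Z" "s - 1/Suc n < u" using less_cSup_iff[OF Zne Zbdd] s_def by auto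
      then have "emeasure \<nu> {0<..<s - 1/Suc n} \<le> emeasure \<nu> {0<..<u}"
        by (intro emeasure_mono) (auto simp: sn)
      with u show ?thesis by (simp add: Z_def)
    qed
    then have "emeasure \<nu> (\<Union>n. {0<..<s - 1/Suc n}) = 0"
      by (intro emeasure_UN_eq_0) (auto simp: sn)
    with eq show ?thesis by simp
  qed
  have spos: "emeasure \<nu> {s..<s+\<eta>} > 0" if "\<eta> > 0" for \<eta>
  proof (rule ccontr)
    assume "\<not> ?thesis"
    then have z: "emeasure \<nu> {s..<s+\<eta>} = 0" by simp
    have "emeasure \<nu> {0<..<s+\<eta>} \<le> emeasure \<nu> ({0<..<s} \<union> {s..<s+\<eta>})"
      by (intro emeasure_mono) (auto simp: sn)
    also have "\<dots> \<le> emeasure \<nu> {0<..<s} + emeasure \<nu> {s..<s+\<eta>}"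
      by (intro emeasure_subadditive) (auto simp: sn)
    finally have "s + \<eta> \<in> Z" using z Ns by (simp add: Z_def)
    then have "s + \<eta> \<le> s" unfolding s_def by (rule cSup_upper[OF _ Zbdd])
    with that show False by simp
  qed
  have sA: "emeasure \<nu> {s} \<ge> 1"
  proof (cases "\<forall>\<eta>>0. emeasure lborel ({s..<s+\<eta>} - B) > 0")
    case True
    have ge: "emeasure \<nu> {s..s + 1/Suc n} \<ge> 1" for n
    proof -
      have "emeasure lborel ({s..<s + 1/Suc n} - B) > 0" using True by simp
      from AE_pos_exists[OF T _ this] obtain x where
        x: "x \<in> {s..<s+1/Suc n} - B" "emeasure \<nu> {y. x - y \<in> B} = 1" by auto
      have "{y. x - y \<in> B} \<subseteq> {s..s+1/Suc n} \<union> (({-1<..<1} - {0}) \<union> {0<..<s})"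
      proof
        fix y assume "y \<in> {y. x - y \<in> B}"
        then have xy: "x - y \<in> B" by simp
        then have "0 \<le> x - y" "x - y \<le> d" using Bsub by auto
        moreover have "y \<noteq> 0" using x xy by auto
        ultimately show "y \<in> {s..s+1/Suc n} \<union> (({-1<..<1} - {0}) \<union> {0<..<s})"
          using x d s1 by (cases "s \<le> y") auto
      qed
      then have "emeasure \<nu> {y. x - y \<in> B} \<le> emeasure \<nu> {s..s+1/Suc n}"
      proof (rule nu_bound[OF l])
        have "emeasure \<nu> (({-1<..<1} - {0}) \<union> {0<..<s}) \<le> emeasure \<nu> ({-1<..<1} - {0}) + emeasure \<nu> {0<..<s}"
          by (intro emeasure_subadditive) (auto simp: sn)
        then show "emeasure \<nu> (({-1<..<1} - {0}) \<union> {0<..<s}) = 0" using N0 Ns by simp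
      qed auto
      with x show ?thesis by simp
    qed
    have inter: "(\<Inter>n. {s..s + 1/Suc n}) = {s}"
    proof
      show "(\<Inter>n. {s..s + 1/Suc n}) \<subseteq> {s}"
      proof
        fix x assume x: "x \<in> (\<Inter>n. {s..s + 1/Suc n})"
        have "x \<le> s"
        proof (rule ccontr)
          assume "\<not> x \<le> s"
          then have "0 < x - s" by simp
          then obtain n where n: "n > 0" "inverse (real n) < x - s" using ex_inverse_of_nat_less by blast
          then obtain m where m: "n = Suc m" by (cases n) auto
          then have "1 / real (Suc m) < x - s" using n by (simp add: field_simps)
          moreover have "x \<le> s + 1 / real (Suc m)" using x by auto
          ultimately show False by simp
        qed
        moreover have "s \<le> x" using x by auto
        ultimately show "x \<in> {s}" by simp
      qed
    qed auto
    have "emeasure \<nu> {s} = (INF n. emeasure \<nu> {s..s + 1/Suc n})"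
    proof -
      have "(INF n. emeasure \<nu> {s..s + 1/Suc n}) = emeasure \<nu> (\<Inter>n. {s..s + 1/Suc n})"
      proof (rule INF_emeasure_decseq')
        show "\<And>i. {s..s + 1/Suc i} \<in> sets \<nu>" by (simp add: sn)
        show "antimono_on UNIV (\<lambda>i. {s..s + 1/Suc i})"
        proof (rule antimonoI)
          fix i j :: nat assume "i \<le> j"
          then have "1 / real (Suc j) \<le> 1 / real (Suc i)" by (intro frac_le) auto
          then show "{s..s + 1/Suc j} \<subseteq> {s..s + 1/Suc i}" by auto
        qed
        show "\<exists>i. emeasure \<nu> {s..s + 1/Suc i} \<noteq> \<infinity>" using l by (auto simp: lf_def less_top)
      qed
      with inter show ?thesis by simp
    qed
    also have "\<dots> \<ge> 1" by (rule INF_greatest) (rule ge)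
    finally show ?thesis .
  next
    case False
    then obtain \<eta> where \<eta>: "\<eta> > 0" "emeasure lborel ({s..<s+\<eta>} - B) = 0" by (auto simp: not_less)
    have "AE y in \<nu>. y \<notin> {s..<s+\<eta>}"
      using AE0
    proof eventually_elim
      case (elim y)
      show ?case
      proof
        assume y: "y \<in> {s..<s+\<eta>}"
        have y0: "y \<noteq> 0" using y s1 by auto
        have e1: "emeasure lborel {x. x + (-y) \<in> B \<inter> {..<s+\<eta>-y}} = emeasure lborel (B \<inter> {..<s+\<eta>-y})"
          by (rule lb_shift) measurable
        have e2: "emeasure lborel (B \<inter> {..<s+\<eta>-y}) > 0" using gp(5) y by auto
        have sub: "{x. x + (-y) \<in> B \<inter> {..<s+\<eta>-y}} \<subseteq> {x. x \<in> B \<and> x - y \<in> B} \<union> ({s..<s+\<eta>} - B)"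
        proof
          fix x assume "x \<in> {x. x + (-y) \<in> B \<inter> {..<s+\<eta>-y}}"
          then have "x - y \<in> B" "x < s + \<eta>" by auto
          moreover then have "0 \<le> x - y" using Bsub by auto
          ultimately show "x \<in> {x. x \<in> B \<and> x - y \<in> B} \<union> ({s..<s+\<eta>} - B)" using y by auto
        qed
        have "emeasure lborel {x. x + (-y) \<in> B \<inter> {..<s+\<eta>-y}} \<le>
              emeasure lborel ({x. x \<in> B \<and> x - y \<in> B} \<union> ({s..<s+\<eta>} - B))"
          using sub by (intro emeasure_mono) auto
        also have "\<dots> \<le> emeasure lborel {x. x \<in> B \<and> x - y \<in> B} + emeasure lborel ({s..<s+\<eta>} - B)"
          by (intro emeasure_subadditive) auto
        finally have "emeasure lborel {x. x \<in> B \<and> x - y \<in> B} > 0" using e1 e2 \<eta> by simp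
        with elim y0 show False by simp
      qed
    qed
    then have "emeasure \<nu> {x \<in> space \<nu>. x \<in> {s..<s+\<eta>}} = 0" by (rule emeasure_eq_0_AE)
    moreover have "{x \<in> space \<nu>. x \<in> {s..<s+\<eta>}} = {s..<s+\<eta>}" using lf_space[OF l] by auto
    ultimately have "emeasure \<nu> {s..<s+\<eta>} = 0" by simp
    with spos[OF \<eta>(1)] show ?thesis by simp
  qed
  have s_one: "emeasure \<nu> {s} = 1" using lemP(1)[OF g l tl sA] .
  have Nsn: "emeasure \<nu> ({s-1<..<s+1} - {s}) = 0" using lemP_nbhd[OF g l tl sA] .
  define W where "W = {d-1<..<s+1} - (B \<union> {x. x - s \<in> B})"
  have Wm[measurable]: "W \<in> sets borel" unfolding W_def by measurable
  have W0: "emeasure lborel W = 0"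
  proof (rule ccontr)
    assume "emeasure lborel W \<noteq> 0"
    then have "emeasure lborel W > 0" by (simp add: zero_less_iff_neq_zero)
    from AE_pos_exists[OF T Wm this] obtain x where
      x: "x \<in> W" "emeasure \<nu> {y. x - y \<in> B} = 1" by auto
    have "{y. x - y \<in> B} \<subseteq> {} \<union> ((({-1<..<1} - {0}) \<union> {0<..<s}) \<union> ({s-1<..<s+1} - {s}))"
    proof
      fix y assume "y \<in> {y. x - y \<in> B}"
      then have xy: "x - y \<in> B" by simp
      then have "0 \<le> x - y" "x - y \<le> d" using Bsub by auto
      moreover have "y \<noteq> 0" "y \<noteq> s" using x xy by (auto simp: W_def)
      ultimately show "y \<in> {} \<union> ((({-1<..<1} - {0}) \<union> {0<..<s}) \<union> ({s-1<..<s+1} - {s}))"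
        using x s1 by (auto simp: W_def)
    qed
    then have "emeasure \<nu> {y. x - y \<in> B} \<le> emeasure \<nu> {}"
    proof (rule nu_bound[OF l])
      have "emeasure \<nu> ((({-1<..<1} - {0}) \<union> {0<..<s}) \<union> ({s-1<..<s+1} - {s})) \<le>
            emeasure \<nu> (({-1<..<1} - {0}) \<union> {0<..<s}) + emeasure \<nu> ({s-1<..<s+1} - {s})"
        by (intro emeasure_subadditive) (auto simp: sn)
      also have "\<dots> \<le> (emeasure \<nu> ({-1<..<1} - {0}) + emeasure \<nu> {0<..<s}) + emeasure \<nu> ({s-1<..<s+1} - {s})"
        by (intro add_right_mono emeasure_subadditive) (auto simp: sn)
      finally show "emeasure \<nu> ((({-1<..<1} - {0}) \<union> {0<..<s}) \<union> ({s-1<..<s+1} - {s})) = 0"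
        using N0 Ns Nsn by simp
    qed auto
    with x show False by simp
  qed
  have cover: "{d-1<..<s+1} \<subseteq> ((B \<inter> {d-1<..}) \<union> {x. x + (-s) \<in> B \<inter> {..<1}}) \<union> W"
    by (auto simp: W_def)
  have m1: "emeasure lborel {d-1<..<s+1} = ennreal (s + 1 - (d - 1))"
    using d s1 by (intro emeasure_lborel_Ioo) simp
  have "emeasure lborel {d-1<..<s+1} \<le> emeasure lborel (((B \<inter> {d-1<..}) \<union> {x. x + (-s) \<in> B \<inter> {..<1}}) \<union> W)"
    using cover by (intro emeasure_mono) auto
  also have "\<dots> \<le> emeasure lborel ((B \<inter> {d-1<..}) \<union> {x. x + (-s) \<in> B \<inter> {..<1}}) + emeasure lborel W"
    by (intro emeasure_subadditive) auto
  also have "\<dots> \<le> (emeasure lborel (B \<inter> {d-1<..}) + emeasure lborel {x. x + (-s) \<in> B \<inter> {..<1}}) + emeasure lborel W"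
    by (intro add_right_mono emeasure_subadditive) auto
  finally have c1: "emeasure lborel {d-1<..<s+1} \<le> emeasure lborel (B \<inter> {d-1<..}) + emeasure lborel (B \<inter> {..<1})"
    using W0 lb_shift[of "B \<inter> {..<1}" "-s"] by simp
  have "emeasure lborel (B \<inter> {..<1}) \<le> emeasure lborel ((B \<inter> {..d-1}) \<union> {d-1<..<1})"
    by (intro emeasure_mono) auto
  also have "\<dots> \<le> emeasure lborel (B \<inter> {..d-1}) + emeasure lborel {d-1<..<1}"
    by (intro emeasure_subadditive) auto
  also have "emeasure lborel {d-1<..<1} = ennreal (2 - d)"
    using d by (subst emeasure_lborel_Ioo) auto
  finally have c2: "emeasure lborel (B \<inter> {..<1}) \<le> emeasure lborel (B \<inter> {..d-1}) + ennreal (2 - d)" .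
  have c3: "emeasure lborel (B \<inter> {d-1<..}) + emeasure lborel (B \<inter> {..d-1}) = 1"
  proof -
    have "emeasure lborel (B \<inter> {d-1<..}) + emeasure lborel (B \<inter> {..d-1}) =
          emeasure lborel ((B \<inter> {d-1<..}) \<union> (B \<inter> {..d-1}))"
      by (intro plus_emeasure) auto
    also have "(B \<inter> {d-1<..}) \<union> (B \<inter> {..d-1}) = B" by auto
    finally show ?thesis using gp(4) by simp
  qed
  have "ennreal (s + 1 - (d - 1)) \<le> emeasure lborel (B \<inter> {d-1<..}) + (emeasure lborel (B \<inter> {..d-1}) + ennreal (2 - d))"
    using c1 c2 m1 by (metis add_left_mono order_trans)
  also have "\<dots> = 1 + ennreal (2 - d)" using c3 by (simp add: add.assoc[symmetric])
  also have "\<dots> = ennreal (3 - d)"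
  proof -
    have "ennreal 1 + ennreal (2 - d) = ennreal (1 + (2 - d))"
      by (rule ennreal_plus[symmetric]) (use d in auto)
    then show ?thesis by (simp add: algebra_simps)
  qed
  finally have "s + 1 - (d - 1) \<le> 3 - d" using d by (subst (asm) ennreal_le_iff) auto
  then have "s = 1" using s1 by simp
  then show ?thesis using s_one Npos1 by simp
qed

lemma lf_meas:
  assumes l: "lf \<nu>" and f: "f \<in> borel_measurable borel"
  shows "(f::real \<Rightarrow> real) \<in> measurable \<nu> borel"
proof -
  have sn: "sets \<nu> = sets borel" using l by (simp add: lf_def)
  have "(measurable \<nu> borel :: (real \<Rightarrow> real) set) = measurable borel borel"
    by (rule measurable_cong_sets) (simp_all add: sn)
  with f show ?thesis by simp
qed

lemma shift_emeasure:
  assumes l: "lf \<nu>" and A: "A \<in> sets borel"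
  shows "emeasure (distr \<nu> borel (\<lambda>y. y - c)) A = emeasure \<nu> {y. y - c \<in> A}"
proof -
  have m: "(\<lambda>y::real. y - c) \<in> measurable \<nu> borel" by (rule lf_meas[OF l]) simp
  show ?thesis using emeasure_distr[OF m A] lf_space[OF l] by (simp add: vimage_def)
qed

lemma refl_emeasure:
  assumes l: "lf \<nu>" and A: "A \<in> sets borel"
  shows "emeasure (distr \<nu> borel uminus) A = emeasure \<nu> {y. - y \<in> A}"
proof -
  have m: "(uminus::real \<Rightarrow> real) \<in> measurable \<nu> borel" by (rule lf_meas[OF l]) simp
  show ?thesis using emeasure_distr[OF m A] lf_space[OF l] by (simp add: vimage_def)
qed

lemma shift_lf:
  assumes l: "lf \<nu>" shows "lf (distr \<nu> borel (\<lambda>y. y - c))"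
  unfolding lf_def
proof (intro conjI allI)
  fix a b :: real
  have "{y. y - c \<in> {a..b}} = {a+c..b+c}" by auto
  then show "emeasure (distr \<nu> borel (\<lambda>y. y - c)) {a..b} < \<infinity>"
    using shift_emeasure[OF l, of "{a..b}" c] l by (simp add: lf_def)
qed simp

lemma refl_lf:
  assumes l: "lf \<nu>" shows "lf (distr \<nu> borel uminus)"
  unfolding lf_def
proof (intro conjI allI)
  fix a b :: real
  have "{y. - y \<in> {a..b}} = {-b..-a}" by auto
  then show "emeasure (distr \<nu> borel uminus) {a..b} < \<infinity>"
    using refl_emeasure[OF l, of "{a..b}"] l by (simp add: lf_def)
qed simp

lemma shift_tiles:
  assumes l: "lf \<nu>" and tl: "tiles \<nu> B" and Bm[measurable]: "B \<in> sets borel"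
  shows "tiles (distr \<nu> borel (\<lambda>y. y - c)) B"
proof -
  have T: "AE x in lborel. emeasure \<nu> {y. x - y \<in> B} = 1" using tl by (simp add: tiles_def)
  have "AE x in lborel. emeasure \<nu> {y. (x + c) - y \<in> B} = 1" by (rule AE_lborel_shift[OF T])
  then show ?thesis unfolding tiles_def
  proof eventually_elim
    case (elim x)
    have "{y. x - y \<in> B} \<in> sets borel" by measurable
    then have "emeasure (distr \<nu> borel (\<lambda>y. y - c)) {y. x - y \<in> B} = emeasure \<nu> {y. y - c \<in> {y. x - y \<in> B}}"
      by (rule shift_emeasure[OF l])
    also have "{y. y - c \<in> {y. x - y \<in> B}} = {y. (x + c) - y \<in> B}" by (auto simp: algebra_simps)
    finally show ?case using elim by simp
  qed
qed

lemma refl_tiles: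
  assumes l: "lf \<nu>" and tl: "tiles \<nu> B" and Bm[measurable]: "B \<in> sets borel"
  shows "tiles (distr \<nu> borel uminus) {x. d - x \<in> B}"
proof -
  have T: "AE x in lborel. emeasure \<nu> {y. x - y \<in> B} = 1" using tl by (simp add: tiles_def)
  have "AE x in lborel. emeasure \<nu> {y. (d - x) - y \<in> B} = 1" by (rule AE_lborel_refl[OF T])
  then show ?thesis unfolding tiles_def
  proof eventually_elim
    case (elim x)
    have "{y. x - y \<in> {x. d - x \<in> B}} \<in> sets borel" by measurable
    then have "emeasure (distr \<nu> borel uminus) {y. x - y \<in> {x. d - x \<in> B}} =
               emeasure \<nu> {y. - y \<in> {y. x - y \<in> {x. d - x \<in> B}}}"
      by (rule refl_emeasure[OF l])
    also have "{y. - y \<in> {y. x - y \<in> {x. d - x \<in> B}}} = {y. (d - x) - y \<in> B}" by (auto simp: algebra_simps)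
    finally show ?case using elim by simp
  qed
qed

lemma refl_good:
  assumes g: "good B d" and r: "\<forall>\<delta>>0. emeasure lborel (B \<inter> {d-\<delta><..}) > 0"
  shows "good {x. d - x \<in> B} d"
proof -
  note gp = good_props[OF g]
  have Bm[measurable]: "B \<in> sets borel" by (rule gp(1))
  have "{x. d - x \<in> B} \<in> sets borel" by measurable
  moreover have "{x. d - x \<in> B} \<subseteq> {0..d}" using gp(2) by force
  moreover have "emeasure lborel {x. d - x \<in> B} = 1" using lb_refl[OF Bm] gp(4) by simp
  moreover have "emeasure lborel ({x. d - x \<in> B} \<inter> {..<\<delta>}) > 0" if "\<delta> > 0" for \<delta>
  proof -
    have "{x. d - x \<in> B} \<inter> {..<\<delta>} = {x. d - x \<in> B \<inter> {d-\<delta><..}}" by auto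
    moreover have "emeasure lborel {x. d - x \<in> B \<inter> {d-\<delta><..}} = emeasure lborel (B \<inter> {d-\<delta><..})"
      by (rule lb_refl) measurable
    ultimately show ?thesis using r that by simp
  qed
  ultimately show ?thesis using gp(3) by (simp add: good_def)
qed

lemma step:
  assumes g: "good B d" and l: "lf \<nu>" and tl: "tiles \<nu> B" and c: "emeasure \<nu> {c} \<ge> 1"
  shows "emeasure \<nu> {c+1} = 1 \<and> emeasure \<nu> {c<..<c+1} = 0"
proof -
  note gp = good_props[OF g]
  let ?\<nu> = "distr \<nu> borel (\<lambda>y. y - c)"
  have l': "lf ?\<nu>" by (rule shift_lf[OF l])
  have t': "tiles ?\<nu> B" by (rule shift_tiles[OF l tl gp(1)])
  have e0: "emeasure ?\<nu> {0} = emeasure \<nu> {c}"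
    using shift_emeasure[OF l, of "{0}" c] by (simp add: )
  have e1: "emeasure ?\<nu> {1} = emeasure \<nu> {c+1}"
  proof -
    have "{y. y - c \<in> {1}} = {c+1}" by auto
    then show ?thesis using shift_emeasure[OF l, of "{1}" c] by simp
  qed
  have e2: "emeasure ?\<nu> {0<..<1} = emeasure \<nu> {c<..<c+1}"
  proof -
    have "{y. y - c \<in> {0<..<1}} = {c<..<c+1}" by auto
    then show ?thesis using shift_emeasure[OF l, of "{0<..<1}" c] by simp
  qed
  have "emeasure ?\<nu> {0} \<ge> 1" using e0 c by simp
  from core[OF g l' t' this] e1 e2 show ?thesis by simp
qed

lemma forward:
  assumes g: "good B d" and l: "lf \<nu>" and tl: "tiles \<nu> B" and c: "emeasure \<nu> {0} \<ge> 1"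
  shows "emeasure \<nu> {real n} = 1 \<and> emeasure \<nu> {real n<..<real n + 1} = 0"
proof -
  have ge: "emeasure \<nu> {real n} \<ge> 1" for n
  proof (induction n)
    case 0 then show ?case using c by simp
  next
    case (Suc n)
    from step[OF g l tl Suc] show ?case by (simp add: add.commute)
  qed
  show ?thesis using lemP(1)[OF g l tl ge[of n]] step[OF g l tl ge[of n]] by simp
qed

lemma all_int:
  assumes g: "good B d" and r: "\<forall>\<delta>>0. emeasure lborel (B \<inter> {d-\<delta><..}) > 0"
    and l: "lf \<nu>" and tl: "tiles \<nu> B" and c: "emeasure \<nu> {0} \<ge> 1"
  shows "emeasure \<nu> {real_of_int k} = 1 \<and> emeasure \<nu> {real_of_int k<..<real_of_int k + 1} = 0"
proof (cases "k \<ge> 0")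
  case True
  then obtain n where "k = int n" by (metis nonneg_eq_int)
  then show ?thesis using forward[OF g l tl c, of n] by simp
next
  case False
  define n where "n = nat (- k - 1)"
  have n: "k = - int n - 1" using False by (simp add: n_def)
  note gp = good_props[OF g]
  let ?\<nu> = "distr \<nu> borel uminus"
  have g': "good {x. d - x \<in> B} d" by (rule refl_good[OF g r])
  have l': "lf ?\<nu>" by (rule refl_lf[OF l])
  have t': "tiles ?\<nu> {x. d - x \<in> B}" by (rule refl_tiles[OF l tl gp(1)])
  have c': "emeasure ?\<nu> {0} \<ge> 1" using refl_emeasure[OF l, of "{0}"] c by simp
  have f: "emeasure ?\<nu> {real (Suc n)} = 1 \<and> emeasure ?\<nu> {real n<..<real n + 1} = 0"
    using forward[OF g' l' t' c', of "Suc n"] forward[OF g' l' t' c', of n] by simp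
  have "{y. - y \<in> {real (Suc n)}} = {real_of_int k}" using n by auto
  moreover have "{y. - y \<in> {real n<..<real n + 1}} = {real_of_int k<..<real_of_int k + 1}" using n by auto
  ultimately show ?thesis using f refl_emeasure[OF l, of "{real (Suc n)}"]
      refl_emeasure[OF l, of "{real n<..<real n + 1}"] by simp
qed

definition addpt :: "real measure \<Rightarrow> real measure" where
  "addpt \<mu> = measure_of UNIV (sets borel) (\<lambda>A. emeasure \<mu> A + indicator A (0::real))"

lemma addpt:
  assumes s: "sets \<mu> = sets borel"
  shows "sets (addpt \<mu>) = sets borel"
    and "A \<in> sets borel \<Longrightarrow> emeasure (addpt \<mu>) A = emeasure \<mu> A + indicator A 0"
proof -
  have sa: "sigma_algebra UNIV (sets (borel :: real measure))"
    using sets.sigma_algebra_axioms[of "borel :: real measure"] by simp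
  show "sets (addpt \<mu>) = sets borel" unfolding addpt_def
    using sigma_algebra.sets_measure_of_eq[OF sa] by simp
  assume A: "A \<in> sets borel"
  show "emeasure (addpt \<mu>) A = emeasure \<mu> A + indicator A 0"
    unfolding addpt_def
  proof (rule emeasure_measure_of_sigma[OF sa _ _ A])
    show "positive (sets borel) (\<lambda>A. emeasure \<mu> A + indicator A (0::real))"
      by (simp add: positive_def)
    show "countably_additive (sets borel) (\<lambda>A. emeasure \<mu> A + indicator A (0::real))"
      unfolding countably_additive_def
    proof (intro allI impI)
      fix F :: "nat \<Rightarrow> real set"
      assume F: "range F \<subseteq> sets borel" "disjoint_family F"
      have "(\<Sum>i. emeasure \<mu> (F i) + indicator (F i) (0::real)) =
            (\<Sum>i. emeasure \<mu> (F i)) + (\<Sum>i. indicator (F i) (0::real) :: ennreal)"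
        by (rule suminf_add[symmetric]) auto
      also have "(\<Sum>i. emeasure \<mu> (F i)) = emeasure \<mu> (\<Union>i. F i)"
        using F s by (intro suminf_emeasure) auto
      also have "(\<Sum>i. indicator (F i) (0::real) :: ennreal) = indicator (\<Union>i. F i) 0"
        using F by (intro suminf_indicator) auto
      finally show "(\<Sum>i. emeasure \<mu> (F i) + indicator (F i) (0::real)) =
            emeasure \<mu> (\<Union> (range F)) + indicator (\<Union> (range F)) 0" .
    qed
  qed
qed

lemma final_eq:
  assumes l: "lf \<mu>" and mu_int: "\<And>k. emeasure \<mu> {real_of_int k} = (if k = 0 then 0 else 1)"
    and mu_gap: "\<And>k. emeasure \<mu> {real_of_int k<..<real_of_int k + 1} = 0"
  shows "\<mu> = nonzero_integer_diracs"
proof -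
  have sn: "sets \<mu> = sets borel" using l by (simp add: lf_def)
  define Zs where "Zs = real_of_int ` (UNIV - {0::int})"
  have Znull: "{0} \<union> (\<Union>k. {real_of_int k<..<real_of_int k + 1}) \<in> null_sets \<mu>"
  proof -
    have n1: "(\<Union>k\<in>UNIV. {real_of_int k<..<real_of_int k + 1}) \<in> null_sets \<mu>"
      using mu_gap sn by (intro null_sets_UN') auto
    have n2: "{0} \<in> null_sets \<mu>" using mu_int[of 0] sn by (intro null_setsI) auto
    show ?thesis using null_sets.Un[OF n2 n1] by simp
  qed
  have nzd_sets: "sets nonzero_integer_diracs = sets borel"
    unfolding nonzero_integer_diracs_def by simp
  show ?thesis
  proof (rule measure_eqI)
    show "sets \<mu> = sets nonzero_integer_diracs" using sn nzd_sets by simp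
    fix A assume A: "A \<in> sets \<mu>"
    then have Ab: "A \<in> sets borel" using sn by simp
    define I where "I = {k::int. k \<noteq> 0 \<and> real_of_int k \<in> A}"
    have "emeasure nonzero_integer_diracs A =
          emeasure (count_space (UNIV - {0::int})) (real_of_int -` A \<inter> space (count_space (UNIV - {0})))"
      unfolding nonzero_integer_diracs_def
      by (rule emeasure_distr) (auto simp: Ab)
    also have "real_of_int -` A \<inter> space (count_space (UNIV - {0})) = I" by (auto simp: I_def)
    also have "emeasure (count_space (UNIV - {0::int})) I = (if finite I then of_nat (card I) else \<infinity>)"
      by (rule emeasure_count_space) (auto simp: I_def)
    finally have R: "emeasure nonzero_integer_diracs A = (if finite I then of_nat (card I) else \<infinity>)" .
    have AZ: "A \<inter> Zs = (\<Union>k\<in>I. {real_of_int k})" by (auto simp: Zs_def I_def)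
    have "emeasure \<mu> (\<Union>k\<in>I. {real_of_int k}) = (\<integral>\<^sup>+ k. emeasure \<mu> {real_of_int k} \<partial>count_space I)"
      by (rule emeasure_UN_countable) (auto simp: sn disjoint_family_on_def)
    also have "\<dots> = (\<integral>\<^sup>+ k. 1 \<partial>count_space I)"
      by (rule nn_integral_cong) (auto simp: mu_int I_def)
    also have "\<dots> = (if finite I then of_nat (card I) else \<infinity>)"
      by (simp add: nn_integral_const emeasure_count_space)
    finally have L1: "emeasure \<mu> (A \<inter> Zs) = (if finite I then of_nat (card I) else \<infinity>)" using AZ by simp
    have sub: "A - Zs \<subseteq> {0} \<union> (\<Union>k. {real_of_int k<..<real_of_int k + 1})"
    proof
      fix x assume x: "x \<in> A - Zs"
      show "x \<in> {0} \<union> (\<Union>k. {real_of_int k<..<real_of_int k + 1})"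
      proof (cases "x = 0")
        case False
        have neq: "x \<noteq> real_of_int \<lfloor>x\<rfloor>"
        proof
          assume e: "x = real_of_int \<lfloor>x\<rfloor>"
          then have "\<lfloor>x\<rfloor> \<noteq> 0" using False by auto
          then have "x \<in> Zs" unfolding Zs_def using e by auto
          with x show False by simp
        qed
        have "real_of_int \<lfloor>x\<rfloor> < x"
          using of_int_floor_le[of x] neq by (metis order_le_neq_trans)
        moreover have "x < real_of_int \<lfloor>x\<rfloor> + 1" using real_of_int_floor_add_one_gt[of x] by simp
        ultimately have "x \<in> {real_of_int \<lfloor>x\<rfloor><..<real_of_int \<lfloor>x\<rfloor> + 1}" by simp
        then show ?thesis by auto
      qed simp
    qed
    have Zsb: "Zs \<in> sets borel"
    proof -
      have "countable Zs" unfolding Zs_def by simp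
      show ?thesis by (rule sets.countable[OF _ \<open>countable Zs\<close>]) simp
    qed
    have AZm: "A - Zs \<in> sets \<mu>" using Ab Zsb sn by simp
    have "A - Zs \<in> null_sets \<mu>" by (rule null_sets_subset[OF Znull AZm sub])
    then have L2: "emeasure \<mu> (A - Zs) = 0" by (rule null_setsD1)
    have "emeasure \<mu> A = emeasure \<mu> (A \<inter> Zs) + emeasure \<mu> (A - Zs)"
    proof -
      have "emeasure \<mu> (A \<inter> Zs) + emeasure \<mu> (A - Zs) = emeasure \<mu> ((A \<inter> Zs) \<union> (A - Zs))"
        using Ab Zsb sn by (intro plus_emeasure) auto
      also have "(A \<inter> Zs) \<union> (A - Zs) = A" by auto
      finally show ?thesis by simp
    qed
    then show "emeasure \<mu> A = emeasure nonzero_integer_diracs A" using L1 L2 R by simp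
  qed
qed

lemma lf_of_lfb:
  assumes "locally_finite_borel \<mu>" shows "lf \<mu>"
  using assms unfolding locally_finite_borel_def lf_def by (auto intro: compact_Icc)

lemma null_translate_AE:
  assumes l: "lf \<mu>" and N: "N \<in> sets borel" "emeasure lborel N = 0"
  shows "AE x in lborel. emeasure \<mu> {y. x - y \<in> N} = 0"
proof -
  have Nm[measurable]: "N \<in> sets borel" by fact
  have sn: "sets \<mu> = sets borel" using l by (simp add: lf_def)
  interpret sf: sigma_finite_measure \<mu> using lf_sigma_finite[OF l] .
  interpret ps: pair_sigma_finite lborel \<mu>
    unfolding pair_sigma_finite_def using lf_sigma_finite[OF l] sigma_finite_lborel by simp
  define f where "f = (\<lambda>x y. indicator N (x - y) :: ennreal)"
  have fm1: "(\<lambda>(x, y). f x y) \<in> borel_measurable (lborel \<Otimes>\<^sub>M \<mu>)"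
  proof -
    have "(\<lambda>(x, y). f x y) \<in> borel_measurable (borel \<Otimes>\<^sub>M borel)" unfolding f_def by measurable
    moreover have "(borel_measurable (lborel \<Otimes>\<^sub>M \<mu>) :: (real \<times> real \<Rightarrow> ennreal) set) = borel_measurable (borel \<Otimes>\<^sub>M borel)"
      by (rule measurable_cong_sets) (auto intro!: sets_pair_measure_cong simp: sn)
    ultimately show ?thesis by (simp only:)
  qed
  have inner: "(\<integral>\<^sup>+ y. f x y \<partial>\<mu>) = emeasure \<mu> {y. x - y \<in> N}" for x
  proof -
    have "{y. x - y \<in> N} \<in> sets \<mu>" using sn by simp
    moreover have "f x y = indicator {y. x - y \<in> N} y" for y by (simp add: f_def indicator_def)
    ultimately show ?thesis by simp
  qed
  have inner2: "(\<integral>\<^sup>+ x. f x y \<partial>lborel) = 0" for y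
  proof -
    have "f x y = indicator {x. x + (-y) \<in> N} x" for x by (simp add: f_def indicator_def)
    moreover have "{x. x + (-y) \<in> N} \<in> sets borel" by measurable
    ultimately show ?thesis using lb_shift[OF Nm, of "-y"] N by simp
  qed
  have "(\<integral>\<^sup>+ x. (\<integral>\<^sup>+ y. f x y \<partial>\<mu>) \<partial>lborel) = (\<integral>\<^sup>+ y. (\<integral>\<^sup>+ x. f x y \<partial>lborel) \<partial>\<mu>)"
    by (rule ps.Fubini'[OF fm1, symmetric])
  also have "\<dots> = 0" using inner2 by simp
  finally have I0: "(\<integral>\<^sup>+ x. emeasure \<mu> {y. x - y \<in> N} \<partial>lborel) = 0" using inner by simp
  have mm: "(\<lambda>x. emeasure \<mu> {y. x - y \<in> N}) \<in> borel_measurable lborel"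
  proof -
    have "(\<lambda>x. \<integral>\<^sup>+ y. f x y \<partial>\<mu>) \<in> borel_measurable lborel"
      using sf.borel_measurable_nn_integral[OF fm1] by simp
    then show ?thesis using inner by simp
  qed
  show ?thesis using I0 mm by (subst (asm) nn_integral_0_iff_AE) auto
qed



theorem proposition3p1:
  fixes \<epsilon> L :: real and E :: "real set" and \<mu> :: "real measure"
  assumes "\<epsilon> > 0"
    and "L = 3/2 - \<epsilon>"
    and "E \<subseteq> {0..L}"
    and "E \<in> sets lebesgue"
    and "emeasure lebesgue E = 1"
    and "Sup E = ess_sup_set E"
    and "Inf E = ess_inf_set E"
    and "locally_finite_borel \<mu>"
    and "weakly_tiles_complement E \<mu>"
  shows "\<mu> = nonzero_integer_diracs"
proof -
  note eps = assms(1) and Ldef = assms(2) and EL = assms(3) and Eleb = assms(4) and mE = assms(5)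
    and esup = assms(6) and einf = assms(7)
  have l: "lf \<mu>" using lf_of_lfb[OF assms(8)] .
  have sn: "sets \<mu> = sets borel" using l by (simp add: lf_def)
  from Eleb obtain S N N' where SN: "E = S \<union> N" "N \<subseteq> N'" "N' \<in> null_sets lborel" "S \<in> sets lborel"
    by (rule sets_completionE)
  have Sm[measurable]: "S \<in> sets borel" using SN by simp
  have N'm[measurable]: "N' \<in> sets borel" using SN by auto
  have N'0: "emeasure lborel N' = 0" using SN by auto
  have SE: "S \<subseteq> E" and ESN: "E \<subseteq> S \<union> N'" using SN by auto
  have intE: "(\<integral>\<^sup>+ x. indicator E x \<partial>lborel) = 1"
    using mE Eleb nn_integral_completion[of lborel "indicator E"] by simp
  have mS: "emeasure lborel S = 1"
  proof -
    have "emeasure lborel S = (\<integral>\<^sup>+ x. indicator S x \<partial>lborel)" by simp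
    also have "\<dots> \<le> (\<integral>\<^sup>+ x. indicator E x \<partial>lborel)"
      using SE by (intro nn_integral_mono) (auto simp: indicator_def)
    finally have le: "emeasure lborel S \<le> 1" using intE by simp
    have "1 \<le> (\<integral>\<^sup>+ x. indicator (S \<union> N') x \<partial>lborel)"
      unfolding intE[symmetric] using ESN by (intro nn_integral_mono) (auto simp: indicator_def)
    also have "\<dots> = emeasure lborel (S \<union> N')" by simp
    also have "\<dots> \<le> emeasure lborel S + emeasure lborel N'" by (intro emeasure_subadditive) auto
    finally have "1 \<le> emeasure lborel S" using N'0 by simp
    with le show ?thesis by simp
  qed
  have Ene: "E \<noteq> {}" using mE by auto
  have bddA: "bdd_above E" using EL by (intro bdd_aboveI[of _ L]) auto
  have bddB: "bdd_below E" using EL by (intro bdd_belowI[of _ 0]) auto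
  define a where "a = Inf E"
  define b where "b = Sup E"
  have aE: "a \<le> x" and xb: "x \<le> b" if "x \<in> E" for x
    using that cInf_lower[OF _ bddB] cSup_upper[OF _ bddA] by (auto simp: a_def b_def)
  have a0: "0 \<le> a" unfolding a_def using EL by (intro cInf_greatest[OF Ene]) auto
  have bL: "b \<le> L" unfolding b_def using EL by (intro cSup_least[OF Ene]) auto
  define B where "B = {x. x + a \<in> S}"
  define d where "d = b - a"
  have Bm[measurable]: "B \<in> sets borel" unfolding B_def by measurable
  have Enull: "E \<notin> null_sets lebesgue" using mE by auto
  have gB: "good B d"
    unfolding good_def
  proof (intro conjI allI impI)
    show "B \<in> sets borel" by (rule Bm)
    show "B \<subseteq> {0..d}"
    proof
      fix x assume "x \<in> B"
      then have xa: "x + a \<in> E" using SE by (auto simp: B_def)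
      have "a \<le> x + a" "x + a \<le> b" using aE[OF xa] xb[OF xa] by auto
      then show "x \<in> {0..d}" by (simp add: d_def)
    qed
    show "d < 3/2" unfolding d_def using a0 bL Ldef eps by simp
    show "emeasure lborel B = 1" unfolding B_def using lb_shift[OF Sm, of a] mS by simp
    fix \<delta> :: real assume \<delta>: "\<delta> > 0"
    have eq: "B \<inter> {..<\<delta>} = {x. x + a \<in> S \<inter> {..<a+\<delta>}}" unfolding B_def by auto
    have "emeasure lborel (B \<inter> {..<\<delta>}) = emeasure lborel (S \<inter> {..<a+\<delta>})"
      unfolding eq by (rule lb_shift) measurable
    moreover have "emeasure lborel (S \<inter> {..<a+\<delta>}) \<noteq> 0"
    proof
      assume z: "emeasure lborel (S \<inter> {..<a+\<delta>}) = 0"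
      have "(S \<inter> {..<a+\<delta>}) \<union> N' \<in> null_sets lborel" using z SN by (intro null_sets.Un) (auto intro!: null_setsI)
      then have "E \<inter> {..<a+\<delta>} \<in> null_sets lebesgue"
        using ESN by (intro null_sets_completion_subset[OF _ null_sets_completionI]) auto
      then have mem: "a + \<delta> \<in> {t. E \<inter> {..<t} \<in> null_sets lebesgue}" by simp
      have bdd: "bdd_above {t. E \<inter> {..<t} \<in> null_sets lebesgue}"
      proof (rule bdd_aboveI)
        fix t assume t: "t \<in> {t. E \<inter> {..<t} \<in> null_sets lebesgue}"
        show "t \<le> b"
        proof (rule ccontr)
          assume "\<not> t \<le> b"
          then have "E \<inter> {..<t} = E" using xb by force
          with t Enull show False by simp
        qed
      qed
      have "a + \<delta> \<le> ess_inf_set E" unfolding ess_inf_set_def by (rule cSup_upper[OF mem bdd])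
      with einf \<delta> show False by (simp add: a_def)
    qed
    ultimately show "emeasure lborel (B \<inter> {..<\<delta>}) > 0" by (simp add: zero_less_iff_neq_zero)
  qed
  have rB: "\<forall>\<delta>>0. emeasure lborel (B \<inter> {d-\<delta><..}) > 0"
  proof (intro allI impI)
    fix \<delta> :: real assume \<delta>: "\<delta> > 0"
    have eq: "B \<inter> {d-\<delta><..} = {x. x + a \<in> S \<inter> {b-\<delta><..}}" unfolding B_def d_def by auto
    have "emeasure lborel (B \<inter> {d-\<delta><..}) = emeasure lborel (S \<inter> {b-\<delta><..})"
      unfolding eq by (rule lb_shift) measurable
    moreover have "emeasure lborel (S \<inter> {b-\<delta><..}) \<noteq> 0"
    proof
      assume z: "emeasure lborel (S \<inter> {b-\<delta><..}) = 0"
      have "(S \<inter> {b-\<delta><..}) \<union> N' \<in> null_sets lborel" using z SN by (intro null_sets.Un) (auto intro!: null_setsI)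
      then have "E \<inter> {b-\<delta><..} \<in> null_sets lebesgue"
        using ESN by (intro null_sets_completion_subset[OF _ null_sets_completionI]) auto
      then have mem: "b - \<delta> \<in> {t. E \<inter> {t<..} \<in> null_sets lebesgue}" by simp
      have bdd: "bdd_below {t. E \<inter> {t<..} \<in> null_sets lebesgue}"
      proof (rule bdd_belowI)
        fix t assume t: "t \<in> {t. E \<inter> {t<..} \<in> null_sets lebesgue}"
        show "a \<le> t"
        proof (rule ccontr)
          assume "\<not> a \<le> t"
          then have "E \<inter> {t<..} = E" using aE by force
          with t Enull show False by simp
        qed
      qed
      have "ess_sup_set E \<le> b - \<delta>" unfolding ess_sup_set_def by (rule cInf_lower[OF mem bdd])
      with esup \<delta> show False by (simp add: b_def)
    qed
    ultimately show "emeasure lborel (B \<inter> {d-\<delta><..}) > 0" by (simp add: zero_less_iff_neq_zero)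
  qed
  have AEconv: "AE x in lborel. conv_ind E \<mu> x = indicator (UNIV - E) x"
    using assms(9) unfolding weakly_tiles_complement_def by (simp add: AE_completion_iff)
  have AEmu: "AE x in lborel. emeasure \<mu> {y. x - y \<in> S} = indicator (UNIV - S) x"
    using AEconv null_translate_AE[OF l N'm N'0] AE_not_in[OF SN(3)]
  proof eventually_elim
    case (elim x)
    have s1: "{y. x - y \<in> S} \<in> sets \<mu>" using sn by simp
    have s2: "{y. x - y \<in> S \<union> N'} \<in> sets \<mu>" using sn by simp
    have "emeasure \<mu> {y. x - y \<in> S} = (\<integral>\<^sup>+ y. indicator {y. x - y \<in> S} y \<partial>\<mu>)" using s1 by simp
    also have "\<dots> \<le> (\<integral>\<^sup>+ y. indicator E (x - y) \<partial>\<mu>)"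
      using SE by (intro nn_integral_mono) (auto simp: indicator_def)
    finally have lo: "emeasure \<mu> {y. x - y \<in> S} \<le> conv_ind E \<mu> x"
      unfolding conv_ind_def nn_integral_completion .
    have "conv_ind E \<mu> x = (\<integral>\<^sup>+ y. indicator E (x - y) \<partial>\<mu>)"
      unfolding conv_ind_def nn_integral_completion ..
    also have "\<dots> \<le> (\<integral>\<^sup>+ y. indicator {y. x - y \<in> S \<union> N'} y \<partial>\<mu>)"
      using ESN by (intro nn_integral_mono) (auto simp: indicator_def)
    also have "\<dots> = emeasure \<mu> {y. x - y \<in> S \<union> N'}" using s2 by simp
    also have "\<dots> \<le> emeasure \<mu> ({y. x - y \<in> S} \<union> {y. x - y \<in> N'})"
      by (intro emeasure_mono) (auto simp: sn)
    also have "\<dots> \<le> emeasure \<mu> {y. x - y \<in> S} + emeasure \<mu> {y. x - y \<in> N'}"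
      by (intro emeasure_subadditive) (auto simp: sn)
    finally have hi: "conv_ind E \<mu> x \<le> emeasure \<mu> {y. x - y \<in> S}" using elim by simp
    have "indicator (UNIV - E) x = (indicator (UNIV - S) x :: ennreal)"
      using elim SE ESN by (auto simp: indicator_def)
    with lo hi elim show ?case by simp
  qed
  have AEB: "AE x in lborel. emeasure \<mu> {y. x - y \<in> B} = indicator (UNIV - B) x"
    using AE_lborel_shift[OF AEmu, of a]
  proof eventually_elim
    case (elim x)
    have "{y. x - y \<in> B} = {y. (x + a) - y \<in> S}" unfolding B_def by (auto simp: algebra_simps)
    moreover have "indicator (UNIV - B) x = (indicator (UNIV - S) (x + a) :: ennreal)"
      unfolding B_def by (auto simp: indicator_def)
    ultimately show ?case using elim by simp
  qed
  define \<nu> where "\<nu> = addpt \<mu>"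
  have snu: "sets \<nu> = sets borel" unfolding \<nu>_def by (rule addpt(1)[OF sn])
  have enu: "emeasure \<nu> A = emeasure \<mu> A + indicator A 0" if "A \<in> sets borel" for A
    unfolding \<nu>_def by (rule addpt(2)[OF sn that])
  have lnu: "lf \<nu>" unfolding lf_def
  proof (intro conjI allI)
    show "sets \<nu> = sets borel" by (rule snu)
    fix x y :: real
    have "emeasure \<mu> {x..y} < \<infinity>" using l by (simp add: lf_def)
    then show "emeasure \<nu> {x..y} < \<infinity>" using enu[of "{x..y}"] by (simp add: indicator_def)
  qed
  have tnu: "tiles \<nu> B" unfolding tiles_def using AEB
  proof eventually_elim
    case (elim x)
    have "{y. x - y \<in> B} \<in> sets borel" by measurable
    then have "emeasure \<nu> {y. x - y \<in> B} = emeasure \<mu> {y. x - y \<in> B} + indicator {y. x - y \<in> B} 0"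
      by (rule enu)
    then show ?case using elim by (auto simp: indicator_def)
  qed
  have nu0: "emeasure \<nu> {0} \<ge> 1" using enu[of "{0}"] by simp
  have AI: "emeasure \<nu> {real_of_int k} = 1 \<and> emeasure \<nu> {real_of_int k<..<real_of_int k + 1} = 0" for k
    by (rule all_int[OF gB rB lnu tnu nu0])
  have mu_int: "emeasure \<mu> {real_of_int k} = (if k = 0 then 0 else 1)" for k
  proof -
    have K: "emeasure \<mu> {real_of_int k} + indicator {real_of_int k} 0 = 1" using AI[of k] enu[of "{real_of_int k}"] by simp
    then show ?thesis
    proof (cases "k = 0")
      case True
      then have "1 + emeasure \<mu> {real_of_int k} \<le> 1 + 0" using K by (simp add: add.commute)
      then have "emeasure \<mu> {real_of_int k} \<le> 0"
        by (subst (asm) ennreal_add_left_cancel_le) auto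
      then show ?thesis using True by simp
    next
      case False
      then have "real_of_int k \<noteq> 0" by simp
      then show ?thesis using False K by (simp add: indicator_def)
    qed
  qed
  have mu_gap: "emeasure \<mu> {real_of_int k<..<real_of_int k + 1} = 0" for k
    using AI[of k] enu[of "{real_of_int k<..<real_of_int k + 1}"] by simp
  show ?thesis by (rule final_eq[OF l mu_int mu_gap])
qed

end
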